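(* For perfectly normal spaces $X$, the following properties are pairwise equivalent: CCC; selectively $2$-star-ccc; selectively $\omega$-star-ccc; weakly Lindelöf; weakly star-Lindelöf; weakly $\omega$-star-Lindelöf; weakly strongly star-Lindelöf; weakly strongly $\omega$-star-Lindelöf; star-Lindelöf; $\omega$-star-Lindelöf; strongly $2$-star-Lindelöf; strongly $\omega$-star-Lindelöf (and hence so is every property that is implied by one of these and implies another of these).
   Context: For $B\subseteq X$ and a family $\mathcal{U}$ of subsets of $X$: $\operatorname{st}^1(B,\mathcal{U})=\bigcup\{U\in\mathcal{U}:U\cap B\neq\emptyset\}$, $\operatorname{st}^{n+1}(B,\mathcal{U})=\bigcup\{U\in\mathcal{U}:U\cap\operatorname{st}^n(B,\mathcal{U})\neq\emptyset\}$. CCC: every pairwise disjoint family of open sets is countable. Weakly Lindelöf: every open cover $\mathcal{U}$ has a countable $\mathcal{V}\subseteq\mathcal{U}$ with $\overline{\bigcup\mathcal{V}}=X$. For $k\in\mathbb{N}^+$: $X$ is $k$-star-Lindelöf (resp. strongly $k$-star-Lindelöf) if every open cover $\mathcal{U}$ admits a countable $\mathcal{V}\subseteq\mathcal{U}$ (resp. countable $B\subseteq X$) with $\operatorname{st}^k(\bigcup\mathcal{V},\mathcal{U})=X$ (resp. $\operatorname{st}^k(B,\mathcal{U})=X$); weakly $k$-star-Lindelöf (resp. weakly strongly $k$-star-Lindelöf) is the same with the conclusion replaced by density: $\overline{\operatorname{st}^k(\bigcup\mathcal{V},\mathcal{U})}=X$ (resp. $\overline{\operatorname{st}^k(B,\mathcal{U})}=X$).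 The $\omega$-versions are defined the same way except that for each open cover one only requires some $k\in\mathbb{N}^+$ (depending on the cover) together with the countable $\mathcal{V}$ or $B$. "Star-Lindelöf", "weakly star-Lindelöf" and "weakly strongly star-Lindelöf" mean the case $k=1$. $X$ is selectively $k$-star-ccc if for every open cover $\mathcal{U}$ and every sequence $(\mathcal{A}_n:n\in\omega)$ of maximal pairwise disjoint families of open sets there is $(A_n\in\mathcal{A}_n:n\in\omega)$ with $\operatorname{st}^k(\bigcup_n A_n,\mathcal{U})=X$; selectively $\omega$-star-ccc is the same but with some $k\in\mathbb{N}^+$ (depending on $\mathcal{U}$ and the sequence) allowed. *)

theory Defs
  imports "HOL-Analysis.Analysis"
begin

text \<open>Perfectly normal (Engelking convention): T1, normal, every closed set is a G-delta.\<close>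
definition perfectly_normal :: "'a topology \<Rightarrow> bool" where
  "perfectly_normal X \<longleftrightarrow> t1_space X \<and> normal_space X \<and> (\<forall>F. closedin X F \<longrightarrow> gdelta_in X F)"

definition open_cover :: "'a topology \<Rightarrow> 'a set set \<Rightarrow> bool" where
  "open_cover X \<U> \<longleftrightarrow> (\<forall>U\<in>\<U>. openin X U) \<and> \<Union>\<U> = topspace X"

text \<open>Iterated star: st 0 B U = B, st (n+1) B U = union of members of U meeting st n B U.
  For k >= 1 this is the paper's st^k.\<close>
fun st :: "nat \<Rightarrow> 'a set \<Rightarrow> 'a set set \<Rightarrow> 'a set" where
  "st 0 B \<U> = B"
| "st (Suc n) B \<U> = \<Union>{U\<in>\<U>. U \<inter> st n B \<U> \<noteq> {}}"

definition ccc :: "'a topology \<Rightarrow> bool" where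
  "ccc X \<longleftrightarrow> (\<forall>\<A>. (\<forall>A\<in>\<A>. openin X A) \<and> pairwise disjnt \<A> \<longrightarrow> countable \<A>)"

definition weakly_lindelof :: "'a topology \<Rightarrow> bool" where
  "weakly_lindelof X \<longleftrightarrow> (\<forall>\<U>. open_cover X \<U> \<longrightarrow>
     (\<exists>\<V>\<subseteq>\<U>. countable \<V> \<and> X closure_of (\<Union>\<V>) = topspace X))"

definition k_star_lindelof :: "nat \<Rightarrow> 'a topology \<Rightarrow> bool" where
  "k_star_lindelof k X \<longleftrightarrow> (\<forall>\<U>. open_cover X \<U> \<longrightarrow>
     (\<exists>\<V>\<subseteq>\<U>. countable \<V> \<and> st k (\<Union>\<V>) \<U> = topspace X))"

definition strongly_k_star_lindelof :: "nat \<Rightarrow> 'a topology \<Rightarrow> bool" where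
  "strongly_k_star_lindelof k X \<longleftrightarrow> (\<forall>\<U>. open_cover X \<U> \<longrightarrow>
     (\<exists>B\<subseteq>topspace X. countable B \<and> st k B \<U> = topspace X))"

definition weakly_k_star_lindelof :: "nat \<Rightarrow> 'a topology \<Rightarrow> bool" where
  "weakly_k_star_lindelof k X \<longleftrightarrow> (\<forall>\<U>. open_cover X \<U> \<longrightarrow>
     (\<exists>\<V>\<subseteq>\<U>. countable \<V> \<and> X closure_of (st k (\<Union>\<V>) \<U>) = topspace X))"

definition weakly_strongly_k_star_lindelof :: "nat \<Rightarrow> 'a topology \<Rightarrow> bool" where
  "weakly_strongly_k_star_lindelof k X \<longleftrightarrow> (\<forall>\<U>. open_cover X \<U> \<longrightarrow>
     (\<exists>B\<subseteq>topspace X. countable B \<and> X closure_of (st k B \<U>) = topspace X))"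

definition omega_star_lindelof :: "'a topology \<Rightarrow> bool" where
  "omega_star_lindelof X \<longleftrightarrow> (\<forall>\<U>. open_cover X \<U> \<longrightarrow>
     (\<exists>k\<ge>1. \<exists>\<V>\<subseteq>\<U>. countable \<V> \<and> st k (\<Union>\<V>) \<U> = topspace X))"

definition strongly_omega_star_lindelof :: "'a topology \<Rightarrow> bool" where
  "strongly_omega_star_lindelof X \<longleftrightarrow> (\<forall>\<U>. open_cover X \<U> \<longrightarrow>
     (\<exists>k\<ge>1. \<exists>B\<subseteq>topspace X. countable B \<and> st k B \<U> = topspace X))"

definition weakly_omega_star_lindelof :: "'a topology \<Rightarrow> bool" where
  "weakly_omega_star_lindelof X \<longleftrightarrow> (\<forall>\<U>. open_cover X \<U> \<longrightarrow>
     (\<exists>k\<ge>1. \<exists>\<V>\<subseteq>\<U>. countable \<V> \<and> X closure_of (st k (\<Union>\<V>) \<U>) = topspace X))"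

definition weakly_strongly_omega_star_lindelof :: "'a topology \<Rightarrow> bool" where
  "weakly_strongly_omega_star_lindelof X \<longleftrightarrow> (\<forall>\<U>. open_cover X \<U> \<longrightarrow>
     (\<exists>k\<ge>1. \<exists>B\<subseteq>topspace X. countable B \<and> X closure_of (st k B \<U>) = topspace X))"

definition max_disjoint_open :: "'a topology \<Rightarrow> 'a set set \<Rightarrow> bool" where
  "max_disjoint_open X \<A> \<longleftrightarrow>
     (\<forall>A\<in>\<A>. openin X A \<and> A \<noteq> {}) \<and> pairwise disjnt \<A> \<and>
     (\<forall>\<B>. \<A> \<subseteq> \<B> \<and> (\<forall>B\<in>\<B>. openin X B \<and> B \<noteq> {}) \<and> pairwise disjnt \<B> \<longrightarrow> \<B> = \<A>)"

definition selectively_k_star_ccc :: "nat \<Rightarrow> 'a topology \<Rightarrow> bool" where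
  "selectively_k_star_ccc k X \<longleftrightarrow> (\<forall>\<U> \<A>. open_cover X \<U> \<and> (\<forall>n::nat. max_disjoint_open X (\<A> n)) \<longrightarrow>
     (\<exists>A. (\<forall>n. A n \<in> \<A> n) \<and> st k (\<Union>n. A n) \<U> = topspace X))"

definition selectively_omega_star_ccc :: "'a topology \<Rightarrow> bool" where
  "selectively_omega_star_ccc X \<longleftrightarrow> (\<forall>\<U> \<A>. open_cover X \<U> \<and> (\<forall>n::nat. max_disjoint_open X (\<A> n)) \<longrightarrow>
     (\<exists>k\<ge>1. \<exists>A. (\<forall>n. A n \<in> \<A> n) \<and> st k (\<Union>n. A n) \<U> = topspace X))"

end

theory Submission imports Defs begin
unbundle cardinal_syntax

lemma inj_times_nat:
  assumes "infinite I" shows "\<exists>h. inj_on h (I \<times> (UNIV::nat set)) \<and> h ` (I \<times> UNIV) \<subseteq> I"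
proof -
  have "|UNIV::nat set| \<le>o |I|" using assms infinite_iff_card_of_nat by blast
  then have "|I \<times> (UNIV::nat set)| =o |I|" using card_of_Times_infinite[OF assms, of "UNIV::nat set"] by auto
  then have "|I \<times> (UNIV::nat set)| \<le>o |I|" using ordIso_iff_ordLeq by blast
  then show ?thesis using card_of_ordLeq by blast
qed

lemma maximal_disjoint:
  assumes "pairwise disjnt A0" "A0 \<subseteq> P"
  shows "\<exists>A. A0 \<subseteq> A \<and> A \<subseteq> P \<and> pairwise disjnt A \<and>
     (\<forall>B. A \<subseteq> B \<and> B \<subseteq> P \<and> pairwise disjnt B \<longrightarrow> B = A)"
proof -
  let ?Z = "{A. A0 \<subseteq> A \<and> A \<subseteq> P \<and> pairwise disjnt A}"
  have "\<exists>M\<in>?Z. \<forall>X\<in>?Z. M \<subseteq> X \<longrightarrow> X = M"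
  proof (rule subset_Zorn_nonempty)
    show "?Z \<noteq> {}" using assms by blast
  next
    fix C assume C: "C \<noteq> {}" "subset.chain ?Z C"
    then have sub: "C \<subseteq> ?Z" and ch: "\<And>x y. x \<in> C \<Longrightarrow> y \<in> C \<Longrightarrow> x \<subseteq> y \<or> y \<subseteq> x"
      unfolding subset_chain_def by (blast, blast)
    have "pairwise disjnt (\<Union>C)"
      unfolding pairwise_def
    proof (intro ballI impI)
      fix a b assume "a \<in> \<Union>C" "b \<in> \<Union>C" "a \<noteq> b"
      then obtain c1 c2 where "c1 \<in> C" "c2 \<in> C" "a \<in> c1" "b \<in> c2" by blast
      then have "a \<in> c1 \<and> b \<in> c1 \<or> a \<in> c2 \<and> b \<in> c2" using ch[of c1 c2] by blast
      moreover have "pairwise disjnt c1" "pairwise disjnt c2" using subsetD[OF sub \<open>c1 \<in> C\<close>] subsetD[OF sub \<open>c2 \<in> C\<close>] by simp_all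
      ultimately show "disjnt a b" using \<open>a \<noteq> b\<close> by (meson pairwiseD)
    qed
    moreover have "A0 \<subseteq> \<Union>C"
    proof -
      obtain c where "c \<in> C" using C(1) by blast
      then have "A0 \<subseteq> c" using sub by blast
      then show ?thesis using \<open>c \<in> C\<close> by blast
    qed
    moreover have "\<Union>C \<subseteq> P" using sub by blast
    ultimately show "\<Union>C \<in> ?Z" by simp
  qed
  then obtain M where M: "M \<in> ?Z" and mx: "\<forall>X\<in>?Z. M \<subseteq> X \<longrightarrow> X = M"
    by (rule bexE)
  show ?thesis
  proof (rule exI[of _ M], intro conjI allI impI)
    show "A0 \<subseteq> M" "M \<subseteq> P" "pairwise disjnt M" using M by simp_all
    fix B assume B: "M \<subseteq> B \<and> B \<subseteq> P \<and> pairwise disjnt B"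
    then have "B \<in> ?Z" using M by auto
    then show "B = M" using mx B by simp
  qed
qed

lemma st_sub_topspace:
  assumes "open_cover X U" shows "st (Suc n) B U \<subseteq> topspace X"
  using assms unfolding open_cover_def by auto

lemma dense_closure:
  assumes "S \<subseteq> topspace X" "\<And>T. openin X T \<Longrightarrow> T \<noteq> {} \<Longrightarrow> T \<inter> S \<noteq> {}"
  shows "X closure_of S = topspace X"
proof
  show "X closure_of S \<subseteq> topspace X" by (rule closure_of_subset_topspace)
  show "topspace X \<subseteq> X closure_of S"
  proof
    fix x assume x: "x \<in> topspace X"
    have "\<exists>y. y \<in> S \<and> y \<in> T" if "x \<in> T" "openin X T" for T
      using assms(2)[of T] that by blast
    then show "x \<in> X closure_of S" using x by (simp add: in_closure_of)
  qed
qed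

lemma maximal_disjoint_obt:
  assumes "pairwise disjnt A0" "A0 \<subseteq> P"
  obtains A where "A0 \<subseteq> A" "A \<subseteq> P" "pairwise disjnt A"
     "\<And>B. A \<subseteq> B \<Longrightarrow> B \<subseteq> P \<Longrightarrow> pairwise disjnt B \<Longrightarrow> B = A"
proof -
  from maximal_disjoint[OF assms] obtain A where "A0 \<subseteq> A \<and> A \<subseteq> P \<and> pairwise disjnt A \<and>
     (\<forall>B. A \<subseteq> B \<and> B \<subseteq> P \<and> pairwise disjnt B \<longrightarrow> B = A)" by (rule exE)
  then show ?thesis by (intro that[of A]) simp_all
qed

lemma fwd_basis:
  assumes "ccc X" "open_cover X U" "topspace X \<noteq> {}"
  obtains B where "countable B" "\<And>b. b\<in>B \<Longrightarrow> openin X b \<and> b \<noteq> {} \<and> (\<exists>u\<in>U. b \<subseteq> u)"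
     "\<And>T. openin X T \<Longrightarrow> T \<noteq> {} \<Longrightarrow> T \<inter> \<Union>B \<noteq> {}"
proof -
  define P where "P = {b. openin X b \<and> b \<noteq> {} \<and> (\<exists>u\<in>U. b \<subseteq> u)}"
  obtain B where B: "B \<subseteq> P" "pairwise disjnt B"
    and mx: "\<And>C. B \<subseteq> C \<Longrightarrow> C \<subseteq> P \<Longrightarrow> pairwise disjnt C \<Longrightarrow> C = B"
    using maximal_disjoint_obt[of "{}" P] by auto
  have Bo: "\<And>b. b\<in>B \<Longrightarrow> openin X b \<and> b \<noteq> {} \<and> (\<exists>u\<in>U. b \<subseteq> u)"
    using B(1) unfolding P_def by auto
  have "countable B" using assms(1) B(2) Bo unfolding ccc_def by simp
  moreover have "T \<inter> \<Union>B \<noteq> {}" if oT: "openin X T" "T \<noteq> {}" for T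
  proof
    assume dis: "T \<inter> \<Union>B = {}"
    obtain x where x: "x \<in> T" using oT by auto
    then have "x \<in> topspace X" using oT openin_subset by auto
    then obtain u where u: "u \<in> U" "x \<in> u" using assms(2) unfolding open_cover_def by auto
    have "openin X u" using u assms(2) unfolding open_cover_def by auto
    then have "openin X (T \<inter> u)" using oT by (simp add: openin_Int)
    then have ou: "T \<inter> u \<in> P" using u x unfolding P_def by auto
    have "\<forall>b\<in>B. disjnt (T \<inter> u) b" using dis by (auto simp: disjnt_def)
    then have "pairwise disjnt (insert (T \<inter> u) B)"
      using B(2) by (simp add: pairwise_insert disjnt_sym)
    moreover have "insert (T \<inter> u) B \<subseteq> P" using ou B(1) by simp
    ultimately have "insert (T \<inter> u) B = B" using mx[of "insert (T \<inter> u) B"] by auto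
    then have "T \<inter> u \<in> B" by auto
    then show False using dis x u by auto
  qed
  ultimately show ?thesis using that Bo by blast
qed

lemma st_Suc_full:
  assumes "open_cover X U" "\<And>T. openin X T \<Longrightarrow> T \<noteq> {} \<Longrightarrow> T \<inter> S \<noteq> {}"
    "S \<subseteq> st n B U"
  shows "st (Suc n) B U = topspace X"
proof
  show "st (Suc n) B U \<subseteq> topspace X" using st_sub_topspace[OF assms(1)] .
  show "topspace X \<subseteq> st (Suc n) B U"
  proof
    fix x assume "x \<in> topspace X"
    then obtain u where u: "u \<in> U" "x \<in> u" using assms(1) unfolding open_cover_def by auto
    have "openin X u" using u assms(1) unfolding open_cover_def by auto
    then have "u \<inter> S \<noteq> {}" using assms(2) u by auto
    then have "u \<inter> st n B U \<noteq> {}" using assms(3) by auto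
    then show "x \<in> st (Suc n) B U" using u by auto
  qed
qed

lemma basis_in_st1:
  assumes "u \<in> U" "b \<subseteq> u" "b \<inter> S \<noteq> {}"
  shows "b \<subseteq> st (Suc 0) S U"
proof -
  have "u \<inter> st 0 S U \<noteq> {}" using assms by auto
  then have "u \<subseteq> st (Suc 0) S U" using assms(1) by auto
  then show ?thesis using assms(2) by auto
qed

lemma ccc_k1:
  assumes "ccc X" "topspace X \<noteq> {}"
  shows "k_star_lindelof 1 X" and "weakly_lindelof X"
proof -
  have *: "\<exists>V\<subseteq>U. countable V \<and> \<Union>V \<subseteq> topspace X \<and> (\<forall>T. openin X T \<longrightarrow> T \<noteq> {} \<longrightarrow> T \<inter> \<Union>V \<noteq> {})"
    if cov: "open_cover X U" for U
  proof -
    obtain B where B: "countable B" "\<And>b. b\<in>B \<Longrightarrow> openin X b \<and> b \<noteq> {} \<and> (\<exists>u\<in>U. b \<subseteq> u)"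
      "\<And>T. openin X T \<Longrightarrow> T \<noteq> {} \<Longrightarrow> T \<inter> \<Union>B \<noteq> {}"
      using fwd_basis[OF assms(1) cov assms(2)] by metis
    define g where "g b = (SOME u. u \<in> U \<and> b \<subseteq> u)" for b
    have g: "g b \<in> U \<and> b \<subseteq> g b" if "b \<in> B" for b
      unfolding g_def using B(2)[OF that] by (metis (no_types, lifting) someI_ex)
    have "g ` B \<subseteq> U" using g by auto
    moreover have "countable (g ` B)" using B(1) by simp
    moreover have "\<Union>(g ` B) \<subseteq> topspace X" using \<open>g ` B \<subseteq> U\<close> cov unfolding open_cover_def by auto
    moreover have "\<Union>B \<subseteq> \<Union>(g ` B)" using g by auto
    then have "\<forall>T. openin X T \<longrightarrow> T \<noteq> {} \<longrightarrow> T \<inter> \<Union>(g ` B) \<noteq> {}"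
    proof (intro allI impI)
      fix T assume "\<Union>B \<subseteq> \<Union>(g ` B)" "openin X T" "T \<noteq> {}"
      then show "T \<inter> \<Union>(g ` B) \<noteq> {}" using B(3)[of T] by auto
    qed
    ultimately show ?thesis by (intro exI[of _ "g ` B"]) simp
  qed
  show "k_star_lindelof 1 X" unfolding k_star_lindelof_def
  proof (intro allI impI)
    fix U assume cov: "open_cover X U"
    obtain V where V: "V \<subseteq> U" "countable V" "\<forall>T. openin X T \<longrightarrow> T \<noteq> {} \<longrightarrow> T \<inter> \<Union>V \<noteq> {}"
      using *[OF cov] by auto
    have "st (Suc 0) (\<Union>V) U = topspace X" by (rule st_Suc_full[OF cov]) (use V in auto)
    then show "\<exists>V\<subseteq>U. countable V \<and> st 1 (\<Union>V) U = topspace X" using V by auto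
  qed
  show "weakly_lindelof X" unfolding weakly_lindelof_def
  proof (intro allI impI)
    fix U assume cov: "open_cover X U"
    obtain V where V: "V \<subseteq> U" "countable V" "\<Union>V \<subseteq> topspace X" "\<forall>T. openin X T \<longrightarrow> T \<noteq> {} \<longrightarrow> T \<inter> \<Union>V \<noteq> {}"
      using *[OF cov] by auto
    have "X closure_of (\<Union>V) = topspace X" by (rule dense_closure) (use V in auto)
    then show "\<exists>V\<subseteq>U. countable V \<and> X closure_of (\<Union>V) = topspace X" using V by auto
  qed
qed

lemma ccc_strong:
  assumes "ccc X" "topspace X \<noteq> {}"
  shows "strongly_k_star_lindelof 2 X" and "weakly_strongly_k_star_lindelof 1 X"
proof -
  have *: "\<exists>P\<subseteq>topspace X. countable P \<and> (\<forall>T. openin X T \<longrightarrow> T \<noteq> {} \<longrightarrow> T \<inter> st (Suc 0) P U \<noteq> {})"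
    if cov: "open_cover X U" for U
  proof -
    obtain B where B: "countable B" "\<And>b. b\<in>B \<Longrightarrow> openin X b \<and> b \<noteq> {} \<and> (\<exists>u\<in>U. b \<subseteq> u)"
      "\<And>T. openin X T \<Longrightarrow> T \<noteq> {} \<Longrightarrow> T \<inter> \<Union>B \<noteq> {}"
      using fwd_basis[OF assms(1) cov assms(2)] by metis
    define q where "q b = (SOME x. x \<in> b)" for b :: "'a set"
    have q: "q b \<in> b" if "b \<in> B" for b
      unfolding q_def using B(2)[OF that] by (metis (no_types, lifting) someI_ex all_not_in_conv)
    have "q ` B \<subseteq> topspace X" using q B(2) openin_subset by fastforce
    moreover have "countable (q ` B)" using B(1) by simp
    moreover have "\<Union>B \<subseteq> st (Suc 0) (q ` B) U"
    proof
      fix x assume "x \<in> \<Union>B"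
      then obtain b where b: "b \<in> B" "x \<in> b" by auto
      then obtain u where "u \<in> U" "b \<subseteq> u" using B(2) by auto
      moreover have "b \<inter> q ` B \<noteq> {}" using q[OF b(1)] b(1) by auto
      ultimately have "b \<subseteq> st (Suc 0) (q ` B) U" by (rule basis_in_st1)
      then show "x \<in> st (Suc 0) (q ` B) U" using b(2) by (rule subsetD)
    qed
    then have "\<forall>T. openin X T \<longrightarrow> T \<noteq> {} \<longrightarrow> T \<inter> st (Suc 0) (q ` B) U \<noteq> {}"
    proof (intro allI impI)
      fix T assume "\<Union>B \<subseteq> st (Suc 0) (q ` B) U" "openin X T" "T \<noteq> {}"
      then show "T \<inter> st (Suc 0) (q ` B) U \<noteq> {}" using B(3)[of T] by blast
    qed
    ultimately show ?thesis by (intro exI[of _ "q ` B"]) simp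
  qed
  show "strongly_k_star_lindelof 2 X" unfolding strongly_k_star_lindelof_def
  proof (intro allI impI)
    fix U assume cov: "open_cover X U"
    obtain P where P: "P \<subseteq> topspace X" "countable P" "\<forall>T. openin X T \<longrightarrow> T \<noteq> {} \<longrightarrow> T \<inter> st (Suc 0) P U \<noteq> {}"
      using *[OF cov] by auto
    have "st (Suc (Suc 0)) P U = topspace X" by (rule st_Suc_full[OF cov]) (use P in auto)
    then show "\<exists>P\<subseteq>topspace X. countable P \<and> st 2 P U = topspace X" using P by (auto simp: numeral_2_eq_2)
  qed
  show "weakly_strongly_k_star_lindelof 1 X" unfolding weakly_strongly_k_star_lindelof_def
  proof (intro allI impI)
    fix U assume cov: "open_cover X U"
    obtain P where P: "P \<subseteq> topspace X" "countable P" "\<forall>T. openin X T \<longrightarrow> T \<noteq> {} \<longrightarrow> T \<inter> st (Suc 0) P U \<noteq> {}"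
      using *[OF cov] by auto
    have "X closure_of (st (Suc 0) P U) = topspace X"
      by (rule dense_closure[OF st_sub_topspace[OF cov]]) (use P in auto)
    then show "\<exists>P\<subseteq>topspace X. countable P \<and> X closure_of (st 1 P U) = topspace X" using P by auto
  qed
qed

lemma ccc_sel2:
  assumes "ccc X" "topspace X \<noteq> {}"
  shows "selectively_k_star_ccc 2 X"
  unfolding selectively_k_star_ccc_def
proof (intro allI impI, elim conjE)
  fix U and AA :: "nat \<Rightarrow> 'a set set"
  assume cov: "open_cover X U" and mx: "\<forall>n. max_disjoint_open X (AA n)"
  obtain B where B: "countable B" "\<And>b. b\<in>B \<Longrightarrow> openin X b \<and> b \<noteq> {} \<and> (\<exists>u\<in>U. b \<subseteq> u)"
    "\<And>T. openin X T \<Longrightarrow> T \<noteq> {} \<Longrightarrow> T \<inter> \<Union>B \<noteq> {}"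
    using fwd_basis[OF assms(1) cov assms(2)] by metis
  have "B \<noteq> {}" using B(3)[of "topspace X"] assms(2) by auto
  define g where "g = from_nat_into B"
  have gB: "g n \<in> B" for n unfolding g_def using from_nat_into[OF \<open>B \<noteq> {}\<close>] .
  have rg: "range g = B" unfolding g_def using \<open>B \<noteq> {}\<close> B(1) by simp
  have ex: "\<exists>A. A \<in> AA n \<and> A \<inter> g n \<noteq> {}" for n
  proof (rule ccontr)
    assume "\<not> ?thesis"
    then have dis: "\<forall>A\<in>AA n. A \<inter> g n = {}" by auto
    have m: "(\<forall>A\<in>AA n. openin X A \<and> A \<noteq> {}) \<and> pairwise disjnt (AA n) \<and>
     (\<forall>C. AA n \<subseteq> C \<and> (\<forall>A\<in>C. openin X A \<and> A \<noteq> {}) \<and> pairwise disjnt C \<longrightarrow> C = AA n)"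
      using mx[rule_format, of n] unfolding max_disjoint_open_def .
    have "pairwise disjnt (insert (g n) (AA n))"
      using m dis by (auto simp: pairwise_insert disjnt_def)
    moreover have "\<forall>A\<in>insert (g n) (AA n). openin X A \<and> A \<noteq> {}" using m B(2)[OF gB] by auto
    moreover have "AA n \<subseteq> insert (g n) (AA n)" by auto
    ultimately have "insert (g n) (AA n) = AA n" using m[THEN conjunct2, THEN conjunct2, rule_format, of "insert (g n) (AA n)"] by simp
    then have "g n \<in> AA n" by auto
    then show False using dis B(2)[OF gB] by auto
  qed
  obtain A where A: "\<And>n. A n \<in> AA n \<and> A n \<inter> g n \<noteq> {}" using ex by metis
  have "\<Union>B \<subseteq> st (Suc 0) (\<Union>n. A n) U"
  proof
    fix x assume "x \<in> \<Union>B"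
    then obtain b where b: "b \<in> B" "x \<in> b" by auto
    then obtain n where n: "b = g n" using rg by auto
    obtain u where "u \<in> U" "b \<subseteq> u" using B(2) b by auto
    moreover have "b \<inter> (\<Union>n. A n) \<noteq> {}" using A[of n] n by auto
    ultimately have "b \<subseteq> st (Suc 0) (\<Union>n. A n) U" by (rule basis_in_st1)
    then show "x \<in> st (Suc 0) (\<Union>n. A n) U" using b(2) by (rule subsetD)
  qed
  then have "st (Suc (Suc 0)) (\<Union>n. A n) U = topspace X"
    by (intro st_Suc_full[OF cov]) (use B(3) in auto)
  then show "\<exists>A. (\<forall>n. A n \<in> AA n) \<and> st 2 (\<Union>n. A n) U = topspace X"
    using A by (intro exI[of _ A]) (simp add: numeral_2_eq_2)
qed

lemma disj_eq:
  assumes "pairwise disjnt F" "a \<in> F" "b \<in> F" "x \<in> a" "x \<in> b"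
  shows "a = b"
  using assms unfolding pairwise_def disjnt_def by blast

lemma bad_cover:
  assumes pn: "perfectly_normal X" and nc: "\<not> ccc X"
  obtains Fam I0 Z Cov where "\<forall>A\<in>Fam. openin X A \<and> A \<noteq> {}" "pairwise disjnt Fam" "I0 \<subseteq> Fam"
    "open_cover X Cov" "\<forall>U\<in>Cov. U = Z \<or> (\<exists>b\<in>Fam. U \<subseteq> b)"
    "\<And>k S. countable {a\<in>I0. \<not> S \<inter> a \<subseteq> Z} \<Longrightarrow> X closure_of (st k S Cov) \<noteq> topspace X"
proof -
  obtain A0 where A0: "\<forall>A\<in>A0. openin X A" "pairwise disjnt A0" "\<not> countable A0"
    using nc unfolding ccc_def by auto
  define Fam where "Fam = A0 - {{}}"
  have Fo: "\<forall>A\<in>Fam. openin X A \<and> A \<noteq> {}" using A0(1) unfolding Fam_def by auto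
  have Fd: "pairwise disjnt Fam" using A0(2) unfolding Fam_def by (rule pairwise_subset) auto
  have Fu: "\<not> countable Fam"
  proof
    assume "countable Fam"
    then have "countable (insert {} Fam)" by simp
    moreover have "A0 \<subseteq> insert {} Fam" unfolding Fam_def by auto
    ultimately show False using A0(3) countable_subset by blast
  qed
  define W where "W = \<Union>Fam"
  have oW: "openin X W" unfolding W_def using Fo by (intro openin_Union) auto
  define F where "F = topspace X - W"
  have cF: "closedin X F" unfolding F_def using oW by (intro closedin_diff) auto
  have "gdelta_in X F" using pn cF unfolding perfectly_normal_def by auto
  then obtain C where C0: "(\<forall>n. openin X (C n)) \<and> (\<forall>n. C (Suc n) \<subseteq> C n) \<and> \<Inter>(range C) = F"
    unfolding gdelta_in_descending by (elim exE)
  then have C: "\<And>n. openin X (C n)" "\<Inter>(range C) = F" by simp_all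
  define p where "p A = (SOME x. x \<in> A)" for A :: "'a set"
  have p: "p A \<in> A" if "A \<in> Fam" for A
    unfolding p_def using Fo that by (simp add: some_in_eq)
  have pn2: "\<exists>n. p A \<notin> C n" if "A \<in> Fam" for A
  proof (rule ccontr)
    assume "\<not> ?thesis"
    then have "p A \<in> F" using C(2) by auto
    moreover have "p A \<in> W" unfolding W_def using p[OF that] that by auto
    ultimately show False unfolding F_def by auto
  qed
  have "\<exists>m. \<not> countable {A\<in>Fam. p A \<notin> C m}"
  proof (rule ccontr)
    assume "\<not> ?thesis"
    then have "countable (\<Union>m. {A\<in>Fam. p A \<notin> C m})" by auto
    moreover have "Fam \<subseteq> (\<Union>m. {A\<in>Fam. p A \<notin> C m})" using pn2 by auto
    ultimately show False using Fu countable_subset by blast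
  qed
  then obtain m where unc: "\<not> countable {A\<in>Fam. p A \<notin> C m}" by auto
  define I0 where "I0 = {A\<in>Fam. p A \<notin> C m}"
  have I0F: "I0 \<subseteq> Fam" unfolding I0_def by auto
  have inf: "infinite I0" using unc countable_finite unfolding I0_def by blast
  obtain h where h: "inj_on h (I0 \<times> (UNIV::nat set))" "h ` (I0 \<times> UNIV) \<subseteq> I0"
    using inj_times_nat[OF inf] by auto
  define N where "N a = snd (inv_into (I0 \<times> (UNIV::nat set)) h a)" for a
  have Nunc: "\<not> countable {a\<in>I0. k \<le> N a}" for k
  proof
    assume cnt: "countable {a\<in>I0. k \<le> N a}"
    have "h ` (I0 \<times> {k}) \<subseteq> {a\<in>I0. k \<le> N a}"
    proof
      fix y assume "y \<in> h ` (I0 \<times> {k})"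
      then obtain b where b: "b \<in> I0" "y = h (b, k)" by auto
      have "inv_into (I0 \<times> UNIV) h y = (b, k)" unfolding b(2) using h(1) b(1) by (simp add: inv_into_f_f)
      then have "N y = k" unfolding N_def by simp
      moreover have "y \<in> I0" using h(2) b by auto
      ultimately show "y \<in> {a\<in>I0. k \<le> N a}" by simp
    qed
    then have "countable (h ` (I0 \<times> {k}))" using cnt countable_subset by blast
    moreover have "inj_on h (I0 \<times> {k})" using h(1) by (rule inj_on_subset) auto
    ultimately have "countable (I0 \<times> {k})" by (rule countable_image_inj_on)
    then have "countable (fst ` (I0 \<times> {k}))" by (rule countable_image)
    moreover have "fst ` (I0 \<times> {k}) = I0" by force
    ultimately show False using unc unfolding I0_def by simp
  qed
  define Gm where "Gm = C m"
  have oGm: "openin X Gm" unfolding Gm_def by (rule C(1))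
  have FG: "F \<subseteq> Gm" unfolding Gm_def using C(2) by auto
  have pG: "p a \<notin> Gm" if "a \<in> I0" for a using that unfolding I0_def Gm_def by auto
  have nrm: "normal_space X" using pn unfolding perfectly_normal_def by auto
  define phi where "phi S = (SOME V. openin X V \<and> S \<subseteq> V \<and> X closure_of V \<subseteq> Gm)" for S
  have phi: "openin X (phi S) \<and> S \<subseteq> phi S \<and> X closure_of (phi S) \<subseteq> Gm"
    if "closedin X S" "S \<subseteq> Gm" for S
  proof -
    have "\<exists>V. openin X V \<and> S \<subseteq> V \<and> X closure_of V \<subseteq> Gm"
      using nrm that oGm unfolding normal_space_alt by blast
    then show ?thesis unfolding phi_def by (rule someI_ex)
  qed
  define K where "K = rec_nat {} (\<lambda>j Kj. phi (F \<union> X closure_of Kj))"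
  have K0: "K 0 = {}" unfolding K_def by simp
  have KS: "K (Suc j) = phi (F \<union> X closure_of (K j))" for j unfolding K_def by simp
  have Kp: "openin X (K j) \<and> X closure_of (K j) \<subseteq> Gm" for j
  proof (induction j)
    case 0 then show ?case by (simp add: K0)
  next
    case (Suc j)
    have "closedin X (F \<union> X closure_of (K j))" using cF by (intro closedin_Un) auto
    moreover have "F \<union> X closure_of (K j) \<subseteq> Gm" using FG Suc by auto
    ultimately show ?case unfolding KS using phi by blast
  qed
  have KF: "F \<subseteq> K (Suc j)" and Kcl: "X closure_of (K j) \<subseteq> K (Suc j)" for j
  proof -
    have "closedin X (F \<union> X closure_of (K j))" using cF by (intro closedin_Un) auto
    moreover have "F \<union> X closure_of (K j) \<subseteq> Gm" using FG Kp by auto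
    ultimately have "F \<union> X closure_of (K j) \<subseteq> K (Suc j)" unfolding KS using phi by blast
    then show "F \<subseteq> K (Suc j)" "X closure_of (K j) \<subseteq> K (Suc j)" by auto
  qed
  have Ksub: "K j \<subseteq> X closure_of (K j)" for j
    using Kp[of j] by (intro closure_of_subset openin_subset) auto
  have Kmono: "K i \<subseteq> K j" if "i \<le> j" for i j
  proof -
    have "K n \<subseteq> K (Suc n)" for n using Ksub[of n] Kcl[of n] by auto
    then show ?thesis using that by (rule lift_Suc_mono_le)
  qed
  have Kpred: "X closure_of (K (i - 1)) \<subseteq> K i" for i
  proof (cases i)
    case 0 then show ?thesis by (simp add: K0)
  next
    case (Suc i') then show ?thesis using Kcl[of i'] by simp
  qed
  have pK: "p a \<notin> X closure_of (K j)" if "a \<in> I0" for a j using Kp[of j] pG[OF that] by auto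
  define Z where "Z = K (Suc 0)"
  define L where "L = {a \<inter> (K (Suc j) - X closure_of (K (j - 1))) | a j. a \<in> I0 \<and> j \<le> N a}"
  define Tp where "Tp = {a - X closure_of (K (N a)) | a. a \<in> I0}"
  define Cov where "Cov = {Z} \<union> (Fam - I0) \<union> L \<union> Tp"
  have struct: "\<forall>U\<in>Cov. U = Z \<or> (\<exists>b\<in>Fam. U \<subseteq> b)"
    unfolding Cov_def L_def Tp_def using I0F by blast
  have opn: "\<forall>U\<in>Cov. openin X U"
  proof
    fix U assume "U \<in> Cov"
    then consider "U = Z" | "U \<in> Fam" | a j where "a \<in> I0" "U = a \<inter> (K (Suc j) - X closure_of (K (j - 1)))"
      | a where "a \<in> I0" "U = a - X closure_of (K (N a))"
      unfolding Cov_def L_def Tp_def by blast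
    then show "openin X U"
    proof cases
      case 1 then show ?thesis unfolding Z_def using Kp by auto
    next
      case 2 then show ?thesis using Fo by auto
    next
      case 3
      have "openin X a" using 3(1) I0F Fo by auto
      then show ?thesis unfolding 3(2) using Kp by (intro openin_Int openin_diff) auto
    next
      case 4
      have "openin X a" using 4(1) I0F Fo by auto
      then show ?thesis unfolding 4(2) by (intro openin_diff) auto
    qed
  qed
  have cov: "open_cover X Cov"
    unfolding open_cover_def
  proof (intro conjI opn equalityI)
    show "\<Union>Cov \<subseteq> topspace X" using opn openin_subset by auto
    show "topspace X \<subseteq> \<Union>Cov"
    proof
      fix x assume x: "x \<in> topspace X"
      show "x \<in> \<Union>Cov"
      proof (cases "x \<in> W")
        case False
        then have "x \<in> Z" using x KF[of 0] unfolding F_def Z_def by auto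
        then show ?thesis unfolding Cov_def by auto
      next
        case True
        then obtain a where a: "a \<in> Fam" "x \<in> a" unfolding W_def by auto
        show ?thesis
        proof (cases "a \<in> I0")
          case False then show ?thesis using a unfolding Cov_def by auto
        next
          case aI: True
          show ?thesis
          proof (cases "x \<in> X closure_of (K (N a))")
            case False
            then have "x \<in> a - X closure_of (K (N a))" using a by auto
            then show ?thesis using aI unfolding Cov_def Tp_def by blast
          next
            case True
            then have xK: "x \<in> K (Suc (N a))" using Kcl by auto
            define j where "j = (LEAST j. x \<in> K j)"
            have xj: "x \<in> K j" unfolding j_def using xK by (rule LeastI)
            have jle: "j \<le> Suc (N a)" unfolding j_def using xK by (rule Least_le)
            have "j \<noteq> 0" using xj K0 by (cases j) auto
            then obtain i where i: "j = Suc i" using not0_implies_Suc by auto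
            have "x \<notin> K i" unfolding j_def
              using not_less_Least[of i "\<lambda>j. x \<in> K j"] i unfolding j_def by auto
            then have "x \<notin> X closure_of (K (i - 1))" using Kpred[of i] by auto
            then have "x \<in> a \<inter> (K (Suc i) - X closure_of (K (i - 1)))" using a xj i by auto
            moreover have "i \<le> N a" using jle i by auto
            ultimately have "x \<in> \<Union>L" unfolding L_def using aI by blast
            then show ?thesis unfolding Cov_def by auto
          qed
        qed
      qed
    qed
  qed
  have bad: "X closure_of (st k S Cov) \<noteq> topspace X" if cnt: "countable {a\<in>I0. \<not> S \<inter> a \<subseteq> Z}" for k S
  proof -
    obtain a where a: "a \<in> I0" "k \<le> N a" "S \<inter> a \<subseteq> Z"
    proof (rule ccontr)
      assume "\<not> thesis"
      then have "{a\<in>I0. k \<le> N a} \<subseteq> {a\<in>I0. \<not> S \<inter> a \<subseteq> Z}" using that by blast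
      then show False using Nunc[of k] cnt countable_subset by blast
    qed
    have aF: "a \<in> Fam" using a(1) I0F by auto
    have stK: "st i S Cov \<inter> a \<subseteq> K (Suc i)" if "i \<le> N a" for i
      using that
    proof (induction i)
      case 0 then show ?case using a(3) unfolding Z_def by simp
    next
      case (Suc i)
      then have IH: "st i S Cov \<inter> a \<subseteq> K (Suc i)" by simp
      show ?case
      proof
        fix x assume "x \<in> st (Suc i) S Cov \<inter> a"
        then obtain U y where U: "U \<in> Cov" "x \<in> U" "y \<in> U" "y \<in> st i S Cov" and xa: "x \<in> a" by auto
        from U(1) consider "U = Z" | "U \<in> Fam - I0"
          | b j where "b \<in> I0" "j \<le> N b" "U = b \<inter> (K (Suc j) - X closure_of (K (j - 1)))"
          | b where "b \<in> I0" "U = b - X closure_of (K (N b))"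
          unfolding Cov_def L_def Tp_def by blast
        then show "x \<in> K (Suc (Suc i))"
        proof cases
          case 1 then show ?thesis using U(2) Kmono[of "Suc 0" "Suc (Suc i)"] unfolding Z_def by auto
        next
          case 2
          then have "U = a" using disj_eq[OF Fd _ aF U(2) xa] by auto
          then show ?thesis using 2 a(1) by auto
        next
          case (3 b j)
          have "b \<in> Fam" using 3(1) I0F by auto
          then have "b = a" using disj_eq[OF Fd _ aF _ xa] U(2) 3(3) by auto
          then have yK: "y \<in> K (Suc i)" using IH U(3,4) 3(3) by auto
          have "y \<notin> K (j - 1)" using U(3) 3(3) Ksub[of "j - 1"] by auto
          then have "\<not> Suc i \<le> j - 1" using yK Kmono[of "Suc i" "j - 1"] by auto
          then have "Suc j \<le> Suc (Suc i)" by auto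
          then show ?thesis using U(2) 3(3) Kmono by blast
        next
          case (4 b)
          have "b \<in> Fam" using 4(1) I0F by auto
          then have "b = a" using disj_eq[OF Fd _ aF _ xa] U(2) 4(2) by auto
          then have yK: "y \<in> K (Suc i)" using IH U(3,4) 4(2) by auto
          have "K (Suc i) \<subseteq> X closure_of (K (N a))" using Kmono[of "Suc i" "N a"] Suc.prems Ksub[of "N a"] by auto
          then show ?thesis using yK U(3) 4(2) \<open>b = a\<close> by auto
        qed
      qed
    qed
    have st_a: "st k S Cov \<inter> a \<subseteq> K (Suc k)" using stK a(2) by simp
    define O1 where "O1 = a - X closure_of (K (Suc k))"
    have "openin X O1" unfolding O1_def using Fo aF by (intro openin_diff) auto
    moreover have "p a \<in> O1" unfolding O1_def using p[OF aF] pK[OF a(1)] by auto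
    moreover have "O1 \<inter> st k S Cov = {}" using st_a Ksub[of "Suc k"] unfolding O1_def by auto
    moreover have "p a \<in> topspace X" using p[OF aF] Fo aF openin_subset by blast
    ultimately show ?thesis unfolding in_closure_of set_eq_iff by blast
  qed
  show ?thesis by (rule that[OF Fo Fd I0F cov struct bad])
qed

lemma cnt_V:
  assumes Fd: "pairwise disjnt Fam" and I0F: "I0 \<subseteq> Fam"
    and struct: "\<forall>U\<in>Cov. U = Z \<or> (\<exists>b\<in>Fam. U \<subseteq> b)"
    and V: "V \<subseteq> Cov" "countable V"
  shows "countable {a\<in>I0. \<not> \<Union>V \<inter> a \<subseteq> Z}"
proof -
  define g where "g v = (SOME b. b \<in> Fam \<and> v \<inter> b \<noteq> {})" for v
  have "{a\<in>I0. \<not> \<Union>V \<inter> a \<subseteq> Z} \<subseteq> g ` V"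
  proof
    fix a assume "a \<in> {a\<in>I0. \<not> \<Union>V \<inter> a \<subseteq> Z}"
    then obtain x v where a: "a \<in> I0" "x \<in> v" "v \<in> V" "x \<in> a" "x \<notin> Z" by auto
    have aF: "a \<in> Fam" using a(1) I0F by auto
    have "v \<noteq> Z" using a by auto
    have "v \<in> Cov" using a(3) V(1) by auto
    then have "v = Z \<or> (\<exists>b\<in>Fam. v \<subseteq> b)" using struct by simp
    then obtain b where b: "b \<in> Fam" "v \<subseteq> b" using \<open>v \<noteq> Z\<close> by auto
    have "b = a" using disj_eq[OF Fd b(1) aF _ a(4)] b(2) a(2) by auto
    have "\<exists>b. b \<in> Fam \<and> v \<inter> b \<noteq> {}" using aF a(2,4) by auto
    then have gv: "g v \<in> Fam \<and> v \<inter> g v \<noteq> {}" unfolding g_def by (rule someI_ex)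
    then obtain y where "y \<in> v" "y \<in> g v" by auto
    then have "g v = a" using disj_eq[OF Fd _ aF, of "g v" y] gv b(2) \<open>b = a\<close> by auto
    then show "a \<in> g ` V" using a(3) by auto
  qed
  moreover have "countable (g ` V)" using V(2) by simp
  ultimately show ?thesis by (rule countable_subset)
qed

lemma cnt_B:
  assumes Fd: "pairwise disjnt Fam" and I0F: "I0 \<subseteq> Fam" and B: "countable B"
  shows "countable {a\<in>I0. \<not> B \<inter> a \<subseteq> Z}"
proof -
  define g where "g x = (SOME b. b \<in> Fam \<and> x \<in> b)" for x
  have "{a\<in>I0. \<not> B \<inter> a \<subseteq> Z} \<subseteq> g ` B"
  proof
    fix a assume "a \<in> {a\<in>I0. \<not> B \<inter> a \<subseteq> Z}"
    then obtain x where a: "a \<in> I0" "x \<in> B" "x \<in> a" by auto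
    have aF: "a \<in> Fam" using a(1) I0F by auto
    have "\<exists>b. b \<in> Fam \<and> x \<in> b" using aF a by auto
    then have gx: "g x \<in> Fam \<and> x \<in> g x" unfolding g_def by (rule someI_ex)
    then have "g x = a" using disj_eq[OF Fd _ aF, of "g x" x] a(3) by auto
    then show "a \<in> g ` B" using a(2) by auto
  qed
  moreover have "countable (g ` B)" using B by simp
  ultimately show ?thesis by (rule countable_subset)
qed

lemma cnt_A:
  fixes A :: "nat \<Rightarrow> 'a set"
  assumes Fd: "pairwise disjnt Fam'" and I0F: "I0 \<subseteq> Fam'" and A: "\<And>n. A n \<in> Fam'"
  shows "countable {a\<in>I0. \<not> (\<Union>n. A n) \<inter> a \<subseteq> Z}"
proof -
  have "{a\<in>I0. \<not> (\<Union>n. A n) \<inter> a \<subseteq> Z} \<subseteq> range A"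
  proof
    fix a assume "a \<in> {a\<in>I0. \<not> (\<Union>n. A n) \<inter> a \<subseteq> Z}"
    then obtain x n where a: "a \<in> I0" "x \<in> A n" "x \<in> a" by auto
    have "A n = a" using disj_eq[OF Fd A[of n] _ a(2) a(3)] a(1) I0F by auto
    then show "a \<in> range A" by auto
  qed
  then show ?thesis by (rule countable_subset) simp
qed

lemma back_wl:
  assumes pn: "perfectly_normal X" and P: "weakly_lindelof X" shows "ccc X"
proof (rule ccontr)
  assume nc: "\<not> ccc X"
  show False
  proof (rule bad_cover[OF pn nc])
  fix Fam I0 Z Cov assume B: "\<forall>A\<in>Fam. openin X A \<and> A \<noteq> {}" "pairwise disjnt Fam" "I0 \<subseteq> Fam"
    "open_cover X Cov" "\<forall>U\<in>Cov. U = Z \<or> (\<exists>b\<in>Fam. U \<subseteq> b)"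
    "\<And>k S. countable {a\<in>I0. \<not> S \<inter> a \<subseteq> Z} \<Longrightarrow> X closure_of (st k S Cov) \<noteq> topspace X"
  obtain V where V: "V \<subseteq> Cov" "countable V" "X closure_of (\<Union>V) = topspace X"
    using P B(4) unfolding weakly_lindelof_def by blast
  have "countable {a\<in>I0. \<not> \<Union>V \<inter> a \<subseteq> Z}" using cnt_V[OF B(2,3,5) V(1,2)] .
  from B(6)[OF this, of 0] V(3) show False by simp
  qed
qed

lemma back_ww:
  assumes pn: "perfectly_normal X" and P: "weakly_omega_star_lindelof X" shows "ccc X"
proof (rule ccontr)
  assume nc: "\<not> ccc X"
  show False
  proof (rule bad_cover[OF pn nc])
  fix Fam I0 Z Cov assume B: "\<forall>A\<in>Fam. openin X A \<and> A \<noteq> {}" "pairwise disjnt Fam" "I0 \<subseteq> Fam"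
    "open_cover X Cov" "\<forall>U\<in>Cov. U = Z \<or> (\<exists>b\<in>Fam. U \<subseteq> b)"
    "\<And>k S. countable {a\<in>I0. \<not> S \<inter> a \<subseteq> Z} \<Longrightarrow> X closure_of (st k S Cov) \<noteq> topspace X"
  obtain k V where V: "V \<subseteq> Cov" "countable V" "X closure_of (st k (\<Union>V) Cov) = topspace X"
    using P B(4) unfolding weakly_omega_star_lindelof_def by blast
  have "countable {a\<in>I0. \<not> \<Union>V \<inter> a \<subseteq> Z}" using cnt_V[OF B(2,3,5) V(1,2)] .
  from B(6)[OF this, of k] V(3) show False by simp
  qed
qed

lemma back_wsw:
  assumes pn: "perfectly_normal X" and P: "weakly_strongly_omega_star_lindelof X" shows "ccc X"
proof (rule ccontr)
  assume nc: "\<not> ccc X"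
  show False
  proof (rule bad_cover[OF pn nc])
  fix Fam I0 Z Cov assume B: "\<forall>A\<in>Fam. openin X A \<and> A \<noteq> {}" "pairwise disjnt Fam" "I0 \<subseteq> Fam"
    "open_cover X Cov" "\<forall>U\<in>Cov. U = Z \<or> (\<exists>b\<in>Fam. U \<subseteq> b)"
    "\<And>k S. countable {a\<in>I0. \<not> S \<inter> a \<subseteq> Z} \<Longrightarrow> X closure_of (st k S Cov) \<noteq> topspace X"
  obtain k P where V: "countable P" "X closure_of (st k P Cov) = topspace X"
    using P B(4) unfolding weakly_strongly_omega_star_lindelof_def by blast
  have "countable {a\<in>I0. \<not> P \<inter> a \<subseteq> Z}" using cnt_B[OF B(2,3) V(1)] .
  from B(6)[OF this, of k] V(2) show False by simp
  qed
qed

lemma back_sel: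
  assumes pn: "perfectly_normal X" and P: "selectively_omega_star_ccc X" shows "ccc X"
proof (rule ccontr)
  assume nc: "\<not> ccc X"
  show False
  proof (rule bad_cover[OF pn nc])
  fix Fam I0 Z Cov assume B: "\<forall>A\<in>Fam. openin X A \<and> A \<noteq> {}" "pairwise disjnt Fam" "I0 \<subseteq> Fam"
    "open_cover X Cov" "\<forall>U\<in>Cov. U = Z \<or> (\<exists>b\<in>Fam. U \<subseteq> b)"
    "\<And>k S. countable {a\<in>I0. \<not> S \<inter> a \<subseteq> Z} \<Longrightarrow> X closure_of (st k S Cov) \<noteq> topspace X"
  obtain F' where F': "Fam \<subseteq> F'" "F' \<subseteq> {b. openin X b \<and> b \<noteq> {}}" "pairwise disjnt F'"
     "\<And>C. F' \<subseteq> C \<Longrightarrow> C \<subseteq> {b. openin X b \<and> b \<noteq> {}} \<Longrightarrow> pairwise disjnt C \<Longrightarrow> C = F'"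
  proof -
    have "Fam \<subseteq> {b. openin X b \<and> b \<noteq> {}}" using B(1) by auto
    then show ?thesis using that by (rule maximal_disjoint_obt[OF B(2)])
  qed
  have "max_disjoint_open X F'" unfolding max_disjoint_open_def
  proof (intro conjI allI impI)
    show "\<forall>A\<in>F'. openin X A \<and> A \<noteq> {}" using F'(2) by auto
    show "pairwise disjnt F'" by (rule F'(3))
    fix C assume "F' \<subseteq> C \<and> (\<forall>B\<in>C. openin X B \<and> B \<noteq> {}) \<and> pairwise disjnt C"
    then show "C = F'" using F'(4)[of C] by auto
  qed
  then have "\<exists>k\<ge>1. \<exists>A. (\<forall>n::nat. A n \<in> F') \<and> st k (\<Union>n. A n) Cov = topspace X"
    using B(4) P[unfolded selectively_omega_star_ccc_def, rule_format, of Cov "\<lambda>n. F'"] by simp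
  then obtain k and A :: "nat \<Rightarrow> 'a set" where A: "\<forall>n. A n \<in> F'" "st k (\<Union>n. A n) Cov = topspace X"
    by blast
  have "countable {a\<in>I0. \<not> (\<Union>n. A n) \<inter> a \<subseteq> Z}"
    by (rule cnt_A[OF F'(3)]) (use B(3) F'(1) A(1) in auto)
  from B(6)[OF this, of k] A(2) show False by simp
  qed
qed

lemma sel2_selw: "selectively_k_star_ccc 2 X \<Longrightarrow> selectively_omega_star_ccc X"
  unfolding selectively_k_star_ccc_def selectively_omega_star_ccc_def
  by (metis one_le_numeral)

lemma k1_w: "k_star_lindelof 1 X \<Longrightarrow> omega_star_lindelof X"
  unfolding k_star_lindelof_def omega_star_lindelof_def by (metis order_refl)

lemma k1_wk1: "k_star_lindelof 1 X \<Longrightarrow> weakly_k_star_lindelof 1 X"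
  unfolding k_star_lindelof_def weakly_k_star_lindelof_def by (metis closure_of_topspace)

lemma wk1_ww: "weakly_k_star_lindelof 1 X \<Longrightarrow> weakly_omega_star_lindelof X"
  unfolding weakly_k_star_lindelof_def weakly_omega_star_lindelof_def by (metis order_refl)

lemma w_ww: "omega_star_lindelof X \<Longrightarrow> weakly_omega_star_lindelof X"
  unfolding omega_star_lindelof_def weakly_omega_star_lindelof_def by (metis closure_of_topspace)

lemma ws1_wsw: "weakly_strongly_k_star_lindelof 1 X \<Longrightarrow> weakly_strongly_omega_star_lindelof X"
  unfolding weakly_strongly_k_star_lindelof_def weakly_strongly_omega_star_lindelof_def by (metis order_refl)

lemma s2_sw: "strongly_k_star_lindelof 2 X \<Longrightarrow> strongly_omega_star_lindelof X"
  unfolding strongly_k_star_lindelof_def strongly_omega_star_lindelof_def by (metis one_le_numeral)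

lemma sw_wsw: "strongly_omega_star_lindelof X \<Longrightarrow> weakly_strongly_omega_star_lindelof X"
  unfolding strongly_omega_star_lindelof_def weakly_strongly_omega_star_lindelof_def by (metis closure_of_topspace)

theorem corollary9:
  fixes X :: "'a topology"
  assumes "perfectly_normal X" and "topspace X \<noteq> {}"
  shows "(ccc X \<longleftrightarrow> selectively_k_star_ccc 2 X)
       \<and> (ccc X \<longleftrightarrow> selectively_omega_star_ccc X)
       \<and> (ccc X \<longleftrightarrow> weakly_lindelof X)
       \<and> (ccc X \<longleftrightarrow> weakly_k_star_lindelof 1 X)
       \<and> (ccc X \<longleftrightarrow> weakly_omega_star_lindelof X)
       \<and> (ccc X \<longleftrightarrow> weakly_strongly_k_star_lindelof 1 X)
       \<and> (ccc X \<longleftrightarrow> weakly_strongly_omega_star_lindelof X)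
       \<and> (ccc X \<longleftrightarrow> k_star_lindelof 1 X)
       \<and> (ccc X \<longleftrightarrow> omega_star_lindelof X)
       \<and> (ccc X \<longleftrightarrow> strongly_k_star_lindelof 2 X)
       \<and> (ccc X \<longleftrightarrow> strongly_omega_star_lindelof X)"
proof -
  note pn = assms(1) and ne = assms(2)
  have f1: "ccc X \<Longrightarrow> selectively_k_star_ccc 2 X" using ccc_sel2 ne by blast
  have f3: "ccc X \<Longrightarrow> weakly_lindelof X" using ccc_k1(2) ne by blast
  have f8: "ccc X \<Longrightarrow> k_star_lindelof 1 X" using ccc_k1(1) ne by blast
  have f10: "ccc X \<Longrightarrow> strongly_k_star_lindelof 2 X" using ccc_strong(1) ne by blast
  have f6: "ccc X \<Longrightarrow> weakly_strongly_k_star_lindelof 1 X" using ccc_strong(2) ne by blast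
  have b2: "selectively_omega_star_ccc X \<Longrightarrow> ccc X" using back_sel pn by blast
  have b3: "weakly_lindelof X \<Longrightarrow> ccc X" using back_wl pn by blast
  have b5: "weakly_omega_star_lindelof X \<Longrightarrow> ccc X" using back_ww pn by blast
  have b7: "weakly_strongly_omega_star_lindelof X \<Longrightarrow> ccc X" using back_wsw pn by blast
  show ?thesis
    using f1 f3 f8 f10 f6 b2 b3 b5 b7 sel2_selw[of X] k1_w[of X] k1_wk1[of X] wk1_ww[of X]
      w_ww[of X] ws1_wsw[of X] s2_sw[of X] sw_wsw[of X]
    by blast
qed

end
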